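(* For every integer $n\ge5$, the coefficient of the monomial $T_nT_{n-1}T_3$ in $R_{n+1}$ is $c^{(n+1)}_{n,n-1,3}=-(n-1)n(n+1)$.
   Context: Let $T_1,T_2,\dots$ be indeterminates, $T_\alpha=T_{\alpha_1}\cdots T_{\alpha_d}$. Define linear operators $L,H$ on monomials (constants sent to $0$): $L(T_{\alpha_1}\cdots T_{\alpha_r})=\sum_{1\le i<j\le r}T_{\alpha_1}\cdots T_{\alpha_i+1}\cdots T_{\alpha_j+1}\cdots T_{\alpha_r}$, $H(T_{\alpha_1}\cdots T_{\alpha_r})=-\frac12\sum_{k=1}^{r}\sum_{l=1}^{\alpha_k-1}\binom{\alpha_k}{l}T_{1+l}T_{1+\alpha_k-l}\prod_{i\ne k}T_{\alpha_i}$. For $n\ge2$ let $A_n=-\sum_{k=1}^{n-1}\binom{n}{k}T_{1+k}T_{1+n-k}T_n$; set $R_2=0$, $R_{n+1}=A_n+L(R_n)+H(R_n)$. $c^{(n)}_\alpha$ is the coefficient of the monomial $T_\alpha$ in $R_n$. *)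

theory Defs
  imports Complex_Main "HOL-Library.Multiset"
begin

(* A monomial T_{a1}...T_{ar} in the commuting indeterminates T_1,T_2,... is the
   multiset {#a1,...,ar#}; a polynomial is its coefficient function (rational
   coefficients). *)
type_synonym mono = "nat multiset"
type_synonym tpoly = "mono \<Rightarrow> rat"

definition single :: "mono \<Rightarrow> tpoly" where
  "single u = (\<lambda>m. if m = u then 1 else 0)"

definition linext :: "(mono \<Rightarrow> tpoly) \<Rightarrow> tpoly \<Rightarrow> tpoly" where
  "linext f p = (\<lambda>m. \<Sum>u\<in>{u. p u \<noteq> 0}. p u * f u m)"

definition Llist :: "nat list \<Rightarrow> tpoly" where
  "Llist xs = (\<lambda>m. \<Sum>j<length xs. \<Sum>i<j.
      single (mset (xs[i := xs!i + 1, j := xs!j + 1])) m)"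

definition Hlist :: "nat list \<Rightarrow> tpoly" where
  "Hlist xs = (\<lambda>m. - (1/2) * (\<Sum>k<length xs. \<Sum>l\<in>{1..<xs!k}.
      of_nat (xs!k choose l) *
      single (mset ((1 + l) # (1 + xs!k - l) # (take k xs @ drop (Suc k) xs))) m))"

definition Lop :: "tpoly \<Rightarrow> tpoly" where
  "Lop = linext (\<lambda>u. Llist (sorted_list_of_multiset u))"

definition Hop :: "tpoly \<Rightarrow> tpoly" where
  "Hop = linext (\<lambda>u. Hlist (sorted_list_of_multiset u))"

definition Apoly :: "nat \<Rightarrow> tpoly" where
  "Apoly n = (\<lambda>m. - (\<Sum>k\<in>{1..n-1}.
      of_nat (n choose k) * single {#1 + k, 1 + n - k, n#} m))"

(* R_2 = 0, R_{n+1} = A_n + L(R_n) + H(R_n) for n >= 2; R_0, R_1 are irrelevant (set to 0) *)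
primrec R :: "nat \<Rightarrow> tpoly" where
  "R 0 = (\<lambda>_. 0)"
| "R (Suc n) = (if n < 2 then (\<lambda>_. 0)
     else (\<lambda>m. Apoly n m + Lop (R n) m + Hop (R n) m))"

definition coef :: "nat \<Rightarrow> mono \<Rightarrow> rat" where
  "coef n \<alpha> = R n \<alpha>"

end

theory Submission
  imports Defs
begin


lemma mset3_eq: "({#p,q,r#} = {#a,b,c#}) \<longleftrightarrow>
  (p=a\<and>q=b\<and>r=c) \<or> (p=a\<and>q=c\<and>r=b) \<or> (p=b\<and>q=a\<and>r=c) \<or>
  (p=b\<and>q=c\<and>r=a) \<or> (p=c\<and>q=a\<and>r=b) \<or> (p=c\<and>q=b\<and>r=a)"
  (is "?l \<longleftrightarrow> ?r")
proof
  assume ?r then show ?l by (elim disjE conjE) (simp_all add: add_mset_commute)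
next
  assume l: ?l
  have "p \<in># {#a,b,c#}" using l[symmetric] by simp
  then have "p = a \<or> p = b \<or> p = c" by simp
  then show ?r
  proof (elim disjE)
    assume "p = a" then have "{#q,r#} = {#b,c#}" using l by simp
    then show ?r using \<open>p = a\<close> by (auto simp: add_eq_conv_diff)
  next
    assume "p = b" then have "{#q,r#} = {#a,c#}" using l by (simp add: add_mset_commute[of a b])
    then show ?r using \<open>p = b\<close> by (auto simp: add_eq_conv_diff)
  next
    assume "p = c" then have "{#q,r#} = {#a,b#}" using l by (metis add_mset_commute add_mset_add_mset_same_iff)
    then show ?r using \<open>p = c\<close> by (auto simp: add_eq_conv_diff)
  qed
qed

lemma linext_nz: "linext f p m \<noteq> 0 \<Longrightarrow> \<exists>u. p u \<noteq> 0 \<and> f u m \<noteq> 0"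
  unfolding linext_def by (erule sum.not_neutral_contains_not_neutral) auto

lemma linext_zero: "(\<And>u. p u \<noteq> 0 \<Longrightarrow> f u m = 0) \<Longrightarrow> linext f p m = 0"
  unfolding linext_def by (auto intro: sum.neutral)

lemma linext_fin:
  assumes "\<And>u. finite {m. f u m \<noteq> 0}"
  shows "finite {m. linext f p m \<noteq> 0}"
proof (cases "finite {u. p u \<noteq> 0}")
  case True
  have "{m. linext f p m \<noteq> 0} \<subseteq> (\<Union>u\<in>{u. p u \<noteq> 0}. {m. f u m \<noteq> 0})"
    using linext_nz by blast
  then show ?thesis using True assms by (meson finite_UN_I finite_subset)
next
  case False
  then show ?thesis unfolding linext_def by simp
qed

lemma single_nz: "single u m \<noteq> 0 \<longleftrightarrow> m = u"
  by (simp add: single_def)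

lemma Llist_nz:
  assumes "Llist xs m \<noteq> 0"
  shows "\<exists>j<length xs. \<exists>i<j. m = mset (xs[i := xs!i + 1, j := xs!j + 1])"
proof -
  from assms obtain j where j: "j < length xs" and
    "(\<Sum>i<j. single (mset (xs[i := xs!i + 1, j := xs!j + 1])) m) \<noteq> 0"
    unfolding Llist_def by (auto elim: sum.not_neutral_contains_not_neutral)
  then obtain i where "i < j" "single (mset (xs[i := xs!i + 1, j := xs!j + 1])) m \<noteq> 0"
    by (auto elim: sum.not_neutral_contains_not_neutral)
  then show ?thesis using j by (auto simp: single_nz)
qed

lemma Hlist_nz:
  assumes "Hlist xs m \<noteq> 0"
  shows "\<exists>k<length xs. \<exists>l\<in>{1..<xs!k}. m = mset ((1 + l) # (1 + xs!k - l) # (take k xs @ drop (Suc k) xs))"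
proof -
  from assms obtain k where k: "k < length xs" and
    "(\<Sum>l\<in>{1..<xs!k}. of_nat (xs!k choose l) * single (mset ((1 + l) # (1 + xs!k - l) # (take k xs @ drop (Suc k) xs))) m) \<noteq> (0::rat)"
    unfolding Hlist_def by (auto elim: sum.not_neutral_contains_not_neutral)
  then obtain l where "l \<in> {1..<xs!k}" "single (mset ((1 + l) # (1 + xs!k - l) # (take k xs @ drop (Suc k) xs))) m \<noteq> 0"
    by (auto elim: sum.not_neutral_contains_not_neutral)
  then show ?thesis using k unfolding single_nz by blast
qed

lemma Llist_fin: "finite {m. Llist xs m \<noteq> 0}"
proof -
  have "{m. Llist xs m \<noteq> 0} \<subseteq> (\<lambda>(i,j). mset (xs[i := xs!i + 1, j := xs!j + 1])) ` ({..<length xs} \<times> {..<length xs})"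
    using Llist_nz by fastforce
  then show ?thesis by (rule finite_subset) auto
qed

lemma Hlist_fin: "finite {m. Hlist xs m \<noteq> 0}"
proof -
  have "{m. Hlist xs m \<noteq> 0} \<subseteq> (\<Union>k<length xs. (\<lambda>l. mset ((1 + l) # (1 + xs!k - l) # (take k xs @ drop (Suc k) xs))) ` {1..<xs!k})"
    using Hlist_nz by fastforce
  then show ?thesis by (rule finite_subset) auto
qed

lemma Apoly_nz: "Apoly n m \<noteq> 0 \<Longrightarrow> \<exists>k\<in>{1..n-1}. m = {#1 + k, 1 + n - k, n#}"
  unfolding Apoly_def
  by (auto elim!: sum.not_neutral_contains_not_neutral simp: single_def split: if_splits)

lemma Apoly_fin: "finite {m. Apoly n m \<noteq> 0}"
proof -
  have "{m. Apoly n m \<noteq> 0} \<subseteq> (\<lambda>k. {#1 + k, 1 + n - k, n#}) ` {1..n-1}"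
    using Apoly_nz by fastforce
  then show ?thesis by (rule finite_subset) auto
qed

lemma R_fin: "finite {m. R k m \<noteq> 0}"
proof (induction k)
  case 0 then show ?case by simp
next
  case (Suc k)
  have "{m. R (Suc k) m \<noteq> 0} \<subseteq> {m. Apoly k m \<noteq> 0} \<union> {m. Lop (R k) m \<noteq> 0} \<union> {m. Hop (R k) m \<noteq> 0}"
    by auto
  moreover have "finite {m. Lop (R k) m \<noteq> 0}" unfolding Lop_def by (rule linext_fin) (rule Llist_fin)
  moreover have "finite {m. Hop (R k) m \<noteq> 0}" unfolding Hop_def by (rule linext_fin) (rule Hlist_fin)
  ultimately show ?case using Apoly_fin by (meson finite_Un finite_subset)
qed

definition good :: "mono \<Rightarrow> bool" where
  "good m \<longleftrightarrow> 3 \<le> size m \<and> (\<forall>x\<in>#m. 2 \<le> x)"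

lemma Llist_good:
  assumes "Llist (sorted_list_of_multiset u) m \<noteq> 0" "good u"
  shows "good m"
proof -
  let ?xs = "sorted_list_of_multiset u"
  from Llist_nz[OF assms(1)] obtain j i where ji: "j < length ?xs" "i < j"
    and m: "m = mset (?xs[i := ?xs!i + 1, j := ?xs!j + 1])" by blast
  have "length ?xs = size u" by (metis mset_sorted_list_of_multiset size_mset)
  then have sz: "size m = size u" using m by simp
  have "set (?xs[i := ?xs!i + 1, j := ?xs!j + 1]) \<subseteq> insert (?xs!j + 1) (insert (?xs!i+1) (set ?xs))"
    by (meson insert_mono order_trans set_update_subset_insert)
  moreover have "?xs!i \<in> set ?xs" using ji by (meson nth_mem order.strict_trans)
  moreover have "?xs!j \<in> set ?xs" using ji by (meson nth_mem)
  ultimately have "\<forall>x\<in>#m. 2 \<le> x" using assms(2) unfolding good_def m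
    by (auto simp del: set_mset_mset) (metis in_mono insertE le_SucI set_mset_mset set_sorted_list_of_multiset)+
  then show ?thesis using sz assms(2) by (simp add: good_def)
qed



lemma Hlist_size:
  assumes "Hlist (sorted_list_of_multiset u) m \<noteq> 0"
  shows "size m = size u + 1"
proof -
  let ?xs = "sorted_list_of_multiset u"
  have len: "length ?xs = size u" by (metis mset_sorted_list_of_multiset size_mset)
  from Hlist_nz[OF assms] obtain k l where "k < length ?xs"
    "m = mset ((1 + l) # (1 + ?xs!k - l) # (take k ?xs @ drop (Suc k) ?xs))" by blast
  then show ?thesis using len by simp
qed

lemma Hlist_good:
  assumes "Hlist (sorted_list_of_multiset u) m \<noteq> 0" "good u"
  shows "good m"
proof -
  let ?xs = "sorted_list_of_multiset u"
  from Hlist_nz[OF assms(1)] obtain k l where k: "k < length ?xs" and l: "l \<in> {1..<?xs!k}" and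
    m: "m = mset ((1 + l) # (1 + ?xs!k - l) # (take k ?xs @ drop (Suc k) ?xs))" by blast
  have "set (take k ?xs @ drop (Suc k) ?xs) \<subseteq> set ?xs"
    by (auto dest: in_set_takeD in_set_dropD)
  then have "\<forall>x\<in>#m. 2 \<le> x" using assms(2) l unfolding good_def m by auto
  then show ?thesis using Hlist_size[OF assms(1)] assms(2) by (simp add: good_def)
qed

lemma R_good: "R k m \<noteq> 0 \<Longrightarrow> good m"
proof (induction k arbitrary: m)
  case 0 then show ?case by simp
next
  case (Suc k)
  then have k2: "\<not> k < 2" by (auto split: if_splits)
  then have "Apoly k m + Lop (R k) m + Hop (R k) m \<noteq> 0" using Suc.prems by simp
  then consider "Apoly k m \<noteq> 0" | "Lop (R k) m \<noteq> 0" | "Hop (R k) m \<noteq> 0" by fastforce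
  then show ?case
  proof cases
    case 1
    then obtain j where "j \<in> {1..k-1}" "m = {#1 + j, 1 + k - j, k#}" using Apoly_nz by blast
    then show ?thesis using k2 by (auto simp: good_def)
  next
    case 2
    then obtain u where "R k u \<noteq> 0" "Llist (sorted_list_of_multiset u) m \<noteq> 0"
      unfolding Lop_def using linext_nz by blast
    then show ?thesis using Llist_good Suc.IH by blast
  next
    case 3
    then obtain u where "R k u \<noteq> 0" "Hlist (sorted_list_of_multiset u) m \<noteq> 0"
      unfolding Hop_def using linext_nz by blast
    then show ?thesis using Hlist_good Suc.IH by blast
  qed
qed

lemma Llist3: "Llist [a,b,c] m = single {#a+1,b+1,c#} m + single {#a+1,b,c+1#} m + single {#a,b+1,c+1#} m"
  unfolding Llist_def by (simp add: numeral_3_eq_3 lessThan_Suc add_mset_commute)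

lemma Lnz3:
  assumes "Llist (sorted_list_of_multiset u) m \<noteq> 0" "size m = 3"
  shows "\<exists>x0 x1 x2. u = {#x0,x1,x2#} \<and> (m = {#x0+1,x1+1,x2#} \<or> m = {#x0+1,x1,x2+1#} \<or> m = {#x0,x1+1,x2+1#})"
proof -
  let ?xs = "sorted_list_of_multiset u"
  from Llist_nz[OF assms(1)] obtain j i where "j < length ?xs" "m = mset (?xs[i := ?xs!i + 1, j := ?xs!j + 1])"
    by blast
  then have "length ?xs = 3" using assms(2) by simp
  then obtain x0 x1 x2 where xs: "?xs = [x0,x1,x2]"
    by (auto simp: numeral_3_eq_3 length_Suc_conv)
  have u: "u = {#x0,x1,x2#}" by (metis xs mset_sorted_list_of_multiset mset.simps add_mset_commute union_code)
  show ?thesis using assms(1) unfolding xs Llist3 using u by (auto simp: single_def split: if_splits)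
qed

lemma Lop_sum:
  assumes fin: "finite {u. p u \<noteq> 0}" and C: "finite C"
    and cand: "\<And>u. p u \<noteq> 0 \<Longrightarrow> Llist (sorted_list_of_multiset u) m \<noteq> 0 \<Longrightarrow> u \<in> C"
  shows "Lop p m = (\<Sum>u\<in>C. p u * Llist (sorted_list_of_multiset u) m)"
proof -
  let ?g = "\<lambda>u. p u * Llist (sorted_list_of_multiset u) m"
  have "Lop p m = sum ?g {u. p u \<noteq> 0}" unfolding Lop_def linext_def by simp
  also have "\<dots> = sum ?g ({u. p u \<noteq> 0} \<union> C)"
    by (rule sum.mono_neutral_left) (use fin C cand in auto)
  also have "\<dots> = sum ?g C"
    by (rule sum.mono_neutral_right) (use fin C cand in auto)
  finally show ?thesis .
qed

lemma Lop_zero: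
  assumes "\<And>u. p u \<noteq> 0 \<Longrightarrow> Llist (sorted_list_of_multiset u) m = 0"
  shows "Lop p m = 0"
  unfolding Lop_def by (rule linext_zero) (use assms in auto)

lemma Hop_zero3: "size m = 3 \<Longrightarrow> Hop (R k) m = 0"
  unfolding Hop_def
proof (rule linext_zero)
  fix u assume "size m = 3" "R k u \<noteq> 0"
  then show "Hlist (sorted_list_of_multiset u) m = 0"
    using R_good[of k u] Hlist_size[of u m] by (auto simp: good_def)
qed

lemma R_Suc: "2 \<le> k \<Longrightarrow> R (Suc k) m = Apoly k m + Lop (R k) m + Hop (R k) m"
  by simp

lemma sorted3: "a \<le> b \<Longrightarrow> b \<le> c \<Longrightarrow> sorted_list_of_multiset {#a,b,c#} = [a,b,c]"
proof -
  assume "a \<le> b" "b \<le> c"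
  have "{#a,b,c#} = mset [a,b,c]" by simp
  then show ?thesis using \<open>a \<le> b\<close> \<open>b \<le> c\<close> by (simp add: sorted_sort_id del: mset.simps)
qed

lemma Apoly_sum:
  assumes "S \<subseteq> {1..k-1}" "\<And>j. j \<in> {1..k-1} \<Longrightarrow> j \<notin> S \<Longrightarrow> single {#1 + j, 1 + k - j, k#} m = 0"
  shows "Apoly k m = - (\<Sum>j\<in>S. of_nat (k choose j) * single {#1 + j, 1 + k - j, k#} m)"
  unfolding Apoly_def
  by (subst sum.mono_neutral_right[OF _ assms(1)]) (use assms(2) in auto)

lemma cand3:
  fixes a b c x0 x1 x2 :: nat
  assumes "{#a,b,c#} = {#x0+1,x1+1,x2#} \<or> {#a,b,c#} = {#x0+1,x1,x2+1#} \<or> {#a,b,c#} = {#x0,x1+1,x2+1#}"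
  shows "(1\<le>a \<and> 1\<le>b \<and> {#x0,x1,x2#} = {#a-1,b-1,c#}) \<or> (1\<le>a \<and> 1\<le>c \<and> {#x0,x1,x2#} = {#a-1,b,c-1#})
     \<or> (1\<le>b \<and> 1\<le>c \<and> {#x0,x1,x2#} = {#a,b-1,c-1#})"
  using assms[unfolded mset3_eq]
  by (elim disjE conjE; simp add: add_mset_commute)

lemma sum3: "A \<noteq> B \<Longrightarrow> A \<noteq> C \<Longrightarrow> B \<noteq> C \<Longrightarrow> sum g {A,B,C} = g A + g B + g C"
  by (simp add: add.assoc)

lemma R_good': "R k {#x0,x1,x2#} \<noteq> 0 \<Longrightarrow> 2 \<le> x0 \<and> 2 \<le> x1 \<and> 2 \<le> x2"
  using R_good[of k "{#x0,x1,x2#}"] by (simp add: good_def)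



lemma Z: "a \<noteq> b \<Longrightarrow> R k {#a,b,2#} = 0"
proof (induction k arbitrary: a b)
  case 0 then show ?case by simp
next
  case (Suc k)
  show ?case
  proof (cases "k < 2")
    case True then show ?thesis by simp
  next
    case False
    have "\<forall>j\<in>{1..k-1}. single {#1+j,1+k-j,k#} {#a,b,2#} = 0"
      using Suc.prems by (auto simp: single_def mset3_eq)
    then have A: "Apoly k {#a,b,2#} = 0" by (simp add: Apoly_def)
    have L: "Lop (R k) {#a,b,2#} = 0"
    proof (rule Lop_zero, rule ccontr)
      fix u assume u: "R k u \<noteq> 0" "Llist (sorted_list_of_multiset u) {#a,b,2#} \<noteq> 0"
      then obtain x0 x1 x2 where ux: "u = {#x0,x1,x2#}" and
        m: "{#a,b,2#} = {#x0+1,x1+1,x2#} \<or> {#a,b,2#} = {#x0+1,x1,x2+1#} \<or> {#a,b,2#} = {#x0,x1+1,x2+1#}"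
        using Lnz3[of u "{#a,b,2#}"] by auto
      have g: "2 \<le> x0" "2 \<le> x1" "2 \<le> x2" using R_good' u(1) ux by auto
      have "(x2 = 2 \<and> x0 \<noteq> x1) \<or> (x1 = 2 \<and> x0 \<noteq> x2) \<or> (x0 = 2 \<and> x1 \<noteq> x2)"
        using m g Suc.prems by (auto simp: mset3_eq)
      then have "R k u = 0"
      proof (elim disjE conjE)
        assume "x2 = 2" "x0 \<noteq> x1" then show ?thesis using Suc.IH[of x0 x1] ux by simp
      next
        assume "x1 = 2" "x0 \<noteq> x2" then show ?thesis using Suc.IH[of x0 x2] ux by (simp add: add_mset_commute)
      next
        assume "x0 = 2" "x1 \<noteq> x2" then show ?thesis using Suc.IH[of x1 x2] ux by (simp add: add_mset_commute)
      qed
      then show False using u by simp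
    qed
    have H: "Hop (R k) {#a,b,2#} = 0" by (rule Hop_zero3) simp
    show ?thesis using A L H False by simp
  qed
qed

lemma R3_222: "R 3 {#2,2,2#} = -2"
proof -
  have "R 3 {#2,2,2#} = Apoly 2 {#2,2,2#} + Lop (R 2) {#2,2,2#} + Hop (R 2) {#2,2,2#}"
    using R_Suc[of 2 "{#2,2,2#}"] by (simp only: Suc_eq_plus1) simp
  moreover have "R 2 = (\<lambda>_. 0)" by (simp add: numeral_2_eq_2)
  moreover have "Apoly 2 {#2,2,2#} = -2" by (simp add: Apoly_def single_def numeral_2_eq_2)
  moreover have "Lop (\<lambda>_. 0) m = 0" "Hop (\<lambda>_. 0) m = 0" for m
    by (simp_all add: Lop_def Hop_def linext_def)
  ultimately show ?thesis by simp
qed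



lemma choose_m1: "1 \<le> m \<Longrightarrow> m choose (m - 1) = m"
  by (metis binomial_symmetric choose_one)

lemma choose_m1': "1 \<le> m \<Longrightarrow> m choose (m - Suc 0) = m"
  using choose_m1 by simp

lemma F_A: assumes "3 \<le> m" shows "Apoly m {#m,m,2#} = - of_nat (2*m)"
proof -
  have "Apoly m {#m,m,2#} = - (\<Sum>j\<in>{1, m-1}. of_nat (m choose j) * single {#1 + j, 1 + m - j, m#} {#m,m,2#})"
    by (rule Apoly_sum) (use assms in \<open>auto simp: single_def mset3_eq\<close>)
  also have "\<dots> = - (of_nat m + of_nat m)"
    using assms by (simp add: single_def mset3_eq choose_m1 choose_m1')
  finally show ?thesis by simp
qed

lemma F: assumes "3 \<le> m" shows "R (m+1) {#m,m,2#} = - of_nat (m*(m+1))"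
  using assms
proof (induction m rule: nat_induct_at_least)
  case base
  have L: "Lop (R 3) {#3,3,2#} = (\<Sum>u\<in>{{#2,2,2#}}. R 3 u * Llist (sorted_list_of_multiset u) {#3,3,2#})"
  proof (rule Lop_sum[OF R_fin])
    fix u assume u: "R 3 u \<noteq> 0" "Llist (sorted_list_of_multiset u) {#3,3,2#} \<noteq> 0"
    then obtain x0 x1 x2 where ux: "u = {#x0,x1,x2#}" and
      m: "{#3,3,2#} = {#x0+1,x1+1,x2#} \<or> {#3,3,2#} = {#x0+1,x1,x2+1#} \<or> {#3,3,2#} = {#x0,x1+1,x2+1#}"
      using Lnz3[of u "{#3,3,2#}"] by auto
    have hu: "\<forall>x\<in>#u. 2 \<le> x" using R_good[OF u(1)] by (simp add: good_def)
    show "u \<in> {{#2,2,2#}}" using cand3[OF m, folded ux] hu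
      by (elim disjE conjE) (simp_all add: add_mset_commute)
  qed simp
  have "Llist (sorted_list_of_multiset {#2,2,2#}) {#3,3,2#} = 3"
    by (simp add: sorted3 Llist3 single_def mset3_eq)
  then have L': "Lop (R 3) {#3,3,2#} = -6" using L R3_222 by simp
  have "R (3+1) {#3,3,2#} = Apoly 3 {#3,3,2#} + Lop (R 3) {#3,3,2#} + Hop (R 3) {#3,3,2#}"
    using R_Suc[of 3] by simp
  then show ?case using L' F_A[of 3] Hop_zero3[of "{#3,3,2#}" 3] by simp
next
  case (Suc m)
  let ?M = "{#Suc m, Suc m, 2#}"
  have L: "Lop (R (Suc m)) ?M = (\<Sum>u\<in>{{#m,m,2#}}. R (Suc m) u * Llist (sorted_list_of_multiset u) ?M)"
  proof (rule Lop_sum[OF R_fin])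
    fix u assume u: "R (Suc m) u \<noteq> 0" "Llist (sorted_list_of_multiset u) ?M \<noteq> 0"
    then obtain x0 x1 x2 where ux: "u = {#x0,x1,x2#}" and
      m: "?M = {#x0+1,x1+1,x2#} \<or> ?M = {#x0+1,x1,x2+1#} \<or> ?M = {#x0,x1+1,x2+1#}"
      using Lnz3[of u ?M] by auto
    have hu: "\<forall>x\<in>#u. 2 \<le> x" using R_good[OF u(1)] by (simp add: good_def)
    show "u \<in> {{#m,m,2#}}" using cand3[OF m, folded ux] hu
      by (elim disjE conjE) (simp_all add: add_mset_commute)
  qed simp
  have "Llist (sorted_list_of_multiset {#m,m,2#}) ?M = 1"
  proof -
    have "{#m,m,2#} = {#2,m,m#}" by (simp add: add_mset_commute)
    then show ?thesis using Suc.hyps by (simp add: sorted3 Llist3 single_def mset3_eq)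
  qed
  then have L': "Lop (R (Suc m)) ?M = - of_nat (m*(m+1))" using L Suc.IH by simp
  have "R (Suc m + 1) ?M = Apoly (Suc m) ?M + Lop (R (Suc m)) ?M + Hop (R (Suc m)) ?M"
    using R_Suc[of "Suc m"] Suc.hyps by simp
  then have "R (Suc m + 1) ?M = - of_nat (2 * Suc m) - of_nat (m*(m+1))"
    using L' F_A[of "Suc m"] Hop_zero3[of ?M "Suc m"] Suc.hyps by simp
  also have "\<dots> = - of_nat (Suc m * (Suc m + 1))" by (simp add: algebra_simps)
  finally show ?case .
qed



lemma G4: "R 5 {#4,3,3#} = -30"
proof -
  let ?M = "{#4,3,3#} :: nat multiset"
  have A: "Apoly 4 ?M = -6"
  proof -
    have "Apoly 4 ?M = - (\<Sum>j\<in>{2}. of_nat (4 choose j) * single {#1 + j, 1 + 4 - j, 4#} ?M)"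
      by (rule Apoly_sum) (auto simp: single_def mset3_eq)
    also have "\<dots> = -6" by (simp add: single_def mset3_eq choose_two)
    finally show ?thesis .
  qed
  have L: "Lop (R 4) ?M = (\<Sum>u\<in>{{#3,3,2#},{#4,2,2#}}. R 4 u * Llist (sorted_list_of_multiset u) ?M)"
  proof (rule Lop_sum[OF R_fin])
    fix u assume u: "R 4 u \<noteq> 0" "Llist (sorted_list_of_multiset u) ?M \<noteq> 0"
    then obtain x0 x1 x2 where ux: "u = {#x0,x1,x2#}" and
      m: "?M = {#x0+1,x1+1,x2#} \<or> ?M = {#x0+1,x1,x2+1#} \<or> ?M = {#x0,x1+1,x2+1#}"
      using Lnz3[of u ?M] by auto
    have hu: "\<forall>x\<in>#u. 2 \<le> x" using R_good[OF u(1)] by (simp add: good_def)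
    show "u \<in> {{#3,3,2#},{#4,2,2#}}" using cand3[OF m, folded ux] hu
      by (elim disjE conjE) (simp_all add: add_mset_commute)
  qed simp
  have z: "R 4 {#4,2,2#} = 0" using Z[of 4 2 4] by simp
  have f: "R 4 {#3,3,2#} = -12" using F[of 3] by simp
  have l: "Llist (sorted_list_of_multiset {#3,3,2#}) ?M = 2"
  proof -
    have "{#3,3,2#} = {#2,3,3::nat#}" by (simp add: add_mset_commute)
    then show ?thesis by (simp add: sorted3 Llist3 single_def mset3_eq)
  qed
  have "Lop (R 4) ?M = -24" using L z f l by (simp add: mset3_eq)
  moreover have "R (4+1) ?M = Apoly 4 ?M + Lop (R 4) ?M + Hop (R 4) ?M"
    using R_Suc[of 4] by simp
  ultimately show ?thesis using A Hop_zero3[of ?M 4] by simp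
qed

lemma G5: "R 6 {#5,4,3#} = -120"
proof -
  let ?M = "{#5,4,3#} :: nat multiset"
  have A: "Apoly 5 ?M = -20"
  proof -
    have "Apoly 5 ?M = - (\<Sum>j\<in>{2,3}. of_nat (5 choose j) * single {#1 + j, 1 + 5 - j, 5#} ?M)"
      by (rule Apoly_sum) (auto simp: single_def mset3_eq)
    also have "\<dots> = -20"
    proof -
      have c2: "(5::nat) choose 2 = 10" by (simp add: choose_two)
      have "(5::nat) choose 3 = 5 choose (5 - 2)" by simp
      also have "\<dots> = 5 choose 2" by (rule binomial_symmetric[symmetric]) simp
      finally have c3: "(5::nat) choose 3 = 10" using c2 by simp
      note c2 c3
      then show ?thesis by (simp add: single_def mset3_eq)
    qed
    finally show ?thesis .
  qed
  have L: "Lop (R 5) ?M = (\<Sum>u\<in>{{#4,3,3#},{#4,4,2#},{#5,3,2#}}. R 5 u * Llist (sorted_list_of_multiset u) ?M)"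
  proof (rule Lop_sum[OF R_fin])
    fix u assume u: "R 5 u \<noteq> 0" "Llist (sorted_list_of_multiset u) ?M \<noteq> 0"
    then obtain x0 x1 x2 where ux: "u = {#x0,x1,x2#}" and
      m: "?M = {#x0+1,x1+1,x2#} \<or> ?M = {#x0+1,x1,x2+1#} \<or> ?M = {#x0,x1+1,x2+1#}"
      using Lnz3[of u ?M] by auto
    have hu: "\<forall>x\<in>#u. 2 \<le> x" using R_good[OF u(1)] by (simp add: good_def)
    show "u \<in> {{#4,3,3#},{#4,4,2#},{#5,3,2#}}" using cand3[OF m, folded ux] hu
      by (elim disjE conjE) (simp_all add: add_mset_commute)
  qed simp
  have z: "R 5 {#5,3,2#} = 0" using Z[of 5 3 5] by simp
  have f: "R 5 {#4,4,2#} = -20" using F[of 4] by simp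
  have l1: "Llist (sorted_list_of_multiset {#4,3,3#}) ?M = 2"
  proof -
    have "{#4,3,3#} = {#3,3,4::nat#}" by (simp add: add_mset_commute)
    then show ?thesis by (simp add: sorted3 Llist3 single_def mset3_eq)
  qed
  have l2: "Llist (sorted_list_of_multiset {#4,4,2#}) ?M = 2"
  proof -
    have "{#4,4,2#} = {#2,4,4::nat#}" by (simp add: add_mset_commute)
    then show ?thesis by (simp add: sorted3 Llist3 single_def mset3_eq)
  qed
  have d: "{#4,3,3#} \<noteq> {#4,4,2::nat#}" "{#4,3,3#} \<noteq> {#5,3,2::nat#}" "{#4,4,2#} \<noteq> {#5,3,2::nat#}"
    by (simp_all add: mset3_eq add_eq_conv_diff)
  have "Lop (R 5) ?M = -100" using L unfolding sum3[OF d] z f l1 l2 G4 by simp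
  moreover have "R (5+1) ?M = Apoly 5 ?M + Lop (R 5) ?M + Hop (R 5) ?M"
    using R_Suc[of 5] by simp
  ultimately show ?thesis using A Hop_zero3[of ?M 5] by simp
qed



lemma choose_sym2: "2 \<le> m \<Longrightarrow> Suc m choose (m - 1) = Suc m choose 2"
  using binomial_symmetric[of 2 "Suc m"] by simp

lemma choose2_double: "of_nat (n choose 2) + of_nat (n choose 2) = (of_nat (n * (n - 1)) :: rat)"
proof -
  have "even (n * (n - 1))"
  proof (cases "even n")
    case True then show ?thesis by simp
  next
    case False then have "even (n - 1)" by presburger
    then show ?thesis by simp
  qed
  then obtain k where k: "n * (n - 1) = 2 * k" by (metis evenE)
  then have "n choose 2 = k" by (simp add: choose_two)
  then have "(n choose 2) + (n choose 2) = n * (n - 1)" using k by simp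
  then show ?thesis by (metis of_nat_add)
qed

lemma G_A: assumes "5 \<le> m"
  shows "Apoly (Suc m) {#Suc m, m, 3#} = - of_nat ((m + 1) * m)"
proof -
  let ?M = "{#Suc m, m, 3#}"
  have "Apoly (Suc m) ?M = - (\<Sum>j\<in>{2, m-1}. of_nat (Suc m choose j) * single {#1 + j, 1 + Suc m - j, Suc m#} ?M)"
    by (rule Apoly_sum) (use assms in \<open>auto simp: single_def mset3_eq\<close>)
  also have "\<dots> = - (of_nat (Suc m choose 2) + of_nat (Suc m choose 2))"
  proof -
    have "{#1 + 2, 1 + Suc m - 2, Suc m#} = ?M" using assms by (simp add: mset3_eq)
    moreover have "{#1 + (m-1), 1 + Suc m - (m-1), Suc m#} = ?M" using assms by (simp add: mset3_eq)
    moreover have "(2::nat) \<noteq> m - 1" using assms by simp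
    ultimately show ?thesis using assms choose_sym2[of m] by (simp add: single_def)
  qed
  also have "\<dots> = - of_nat ((m + 1) * m)" by (subst choose2_double) simp
  finally show ?thesis .
qed

lemma G: assumes "5 \<le> n" shows "R (n+1) {#n, n-1, 3#} = - of_nat ((n-1) * n * (n+1))"
  using assms
proof (induction n rule: nat_induct_at_least)
  case base
  then show ?case using G5 by simp
next
  case (Suc m)
  let ?M = "{#Suc m, m, 3#}"
  let ?C = "{{#m, m-1, 3#}, {#m, m, 2#}, {#Suc m, m-1, 2#}}"
  have L: "Lop (R (Suc m)) ?M = (\<Sum>u\<in>?C. R (Suc m) u * Llist (sorted_list_of_multiset u) ?M)"
  proof (rule Lop_sum[OF R_fin])
    fix u assume u: "R (Suc m) u \<noteq> 0" "Llist (sorted_list_of_multiset u) ?M \<noteq> 0"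
    then obtain x0 x1 x2 where ux: "u = {#x0,x1,x2#}" and
      m: "?M = {#x0+1,x1+1,x2#} \<or> ?M = {#x0+1,x1,x2+1#} \<or> ?M = {#x0,x1+1,x2+1#}"
      using Lnz3[of u ?M] by auto
    have hu: "\<forall>x\<in>#u. 2 \<le> x" using R_good[OF u(1)] by (simp add: good_def)
    show "u \<in> ?C" using cand3[OF m, folded ux] hu
      by (elim disjE conjE) (simp_all add: add_mset_commute)
  qed simp
  have z: "R (Suc m) {#Suc m, m-1, 2#} = 0" using Z[of "Suc m" "m-1" "Suc m"] by simp
  have f: "R (Suc m) {#m,m,2#} = - of_nat (m*(m+1))" using F[of m] Suc.hyps by simp
  have ih: "R (Suc m) {#m, m-1, 3#} = - of_nat ((m-1) * m * (m+1))" using Suc.IH by simp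
  have l1: "Llist (sorted_list_of_multiset {#m, m-1, 3#}) ?M = 1"
  proof -
    have eq: "{#m, m-1, 3#} = {#3, m-1, m#}" by (simp add: add_mset_commute)
    have c: "3 \<le> m-1" "m-1 \<le> m" using Suc.hyps by auto
    have so: "sorted_list_of_multiset {#m, m-1, 3#} = [3, m-1, m]"
      by (subst eq) (rule sorted3[OF c])
    show ?thesis unfolding so Llist3 using Suc.hyps by (simp add: single_def mset3_eq)
  qed
  have l2: "Llist (sorted_list_of_multiset {#m, m, 2#}) ?M = 2"
  proof -
    have "{#m, m, 2#} = {#2, m, m#}" by (simp add: add_mset_commute)
    then show ?thesis using Suc.hyps by (simp add: sorted3 Llist3 single_def mset3_eq)
  qed
  have dist: "{#m, m-1, 3#} \<noteq> {#m, m, 2#}" "{#m, m-1, 3#} \<noteq> {#Suc m, m-1, 2#}" "{#m, m, 2#} \<noteq> {#Suc m, m-1, 2#}"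
    using Suc.hyps by (auto simp: mset3_eq add_eq_conv_diff)
  have LL: "Lop (R (Suc m)) ?M = - of_nat ((m-1) * m * (m+1)) - 2 * of_nat (m*(m+1))"
    using L z f ih l1 l2 dist by simp
  have "R (Suc m + 1) ?M = Apoly (Suc m) ?M + Lop (R (Suc m)) ?M + Hop (R (Suc m)) ?M"
    using R_Suc[of "Suc m"] Suc.hyps by simp
  then have "R (Suc m + 1) ?M = - of_nat ((m + 1) * m) - of_nat ((m-1) * m * (m+1)) - 2 * of_nat (m*(m+1))"
    using LL G_A[OF Suc.hyps] Hop_zero3[of ?M "Suc m"] by simp
  also have "\<dots> = - of_nat (m * Suc m * (Suc m + 1))"
  proof -
    obtain k where k: "m = Suc k" using Suc.hyps by (cases m) auto
    show ?thesis unfolding k by (simp add: algebra_simps)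
  qed
  finally show ?case by simp
qed

theorem mainTheorem14:
  fixes n :: nat
  assumes "n \<ge> 5"
  shows "coef (n + 1) {#n, n - 1, 3#} = - of_nat ((n - 1) * n * (n + 1))"
  unfolding coef_def using G[OF assms] .


end
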